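(* Let $({\cal A},{\cal A}_0)$ be a locally convex quasi *-algebra with identity and topology $\tau$, let $\omega_0$ be a positive linear functional on ${\cal A}_0$ with $\omega_0(a^*a)\le p(a)^2$ for all $a\in{\cal A}_0$ for some $\tau$-continuous seminorm $p$, and let $\omega=\tilde\omega_0$ be its continuous extension to ${\cal A}$, with GNS construction $(\pi_\omega,\lambda_\omega,{\cal H}_\omega)$. If $x\in{\cal A}$ and $\{x_\alpha\}\subset{\cal A}_0$ is a net with $\tau$-$\lim_\alpha x_\alpha=x$, then $\lambda_\omega(x_\alpha)=\lambda_{\omega_0}(x_\alpha)\to\lambda_\omega(x)$ in ${\cal H}_\omega$.
   Context: A locally convex quasi *-algebra $({\cal A},{\cal A}_0)$: ${\cal A}_0$ is a *-algebra with a locally convex topology $\tau$ making the involution and the multiplications $a\mapsto ab$, $a\mapsto ba$ ($b\in{\cal A}_0$) continuous, ${\cal A}$ is the $\tau$-completion, with the involution and the products $ax,xa$ ($a\in{\cal A}$, $x\in{\cal A}_0$) extended by continuity. The functional $\omega$ is representable, and its GNS construction consists of a Hilbert space ${\cal H}_\omega$, a linear map $\lambda_\omega:{\cal A}\to{\cal H}_\omega$ with $\lambda_\omega({\cal A}_0)$ dense and $\langle\lambda_\omega(x),\lambda_\omega(a)\rangle=\omega(a^*x)$ for $x\in{\cal A}$, $a\in{\cal A}_0$, and a *-representation $\pi_\omega$ with domain $\lambda_\omega({\cal A}_0)$ satisfying $\pi_\omega(x)\lambda_\omega(a)=\lambda_\omega(xa)$; $\lambda_{\omega_0}$ denotes the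 GNS map of $\omega_0$ on ${\cal A}_0$, which coincides with $\lambda_\omega$ on ${\cal A}_0$. *)

theory Defs
  imports "HOL-Analysis.Analysis"
begin

text \<open>The distribution has no class of complex vector spaces, so a complex vector space is
  a real vector space together with a real-linear map J (multiplication by the imaginary
  unit) with J (J x) = - x.\<close>

definition complex_structure :: "('v::real_vector \<Rightarrow> 'v) \<Rightarrow> bool" where
  "complex_structure J \<longleftrightarrow> linear J \<and> (\<forall>x. J (J x) = - x)"

definition cscale :: "('v::real_vector \<Rightarrow> 'v) \<Rightarrow> complex \<Rightarrow> 'v \<Rightarrow> 'v" where
  "cscale J c x = Re c *\<^sub>R x + Im c *\<^sub>R J x"

definition csubspace :: "('v::real_vector \<Rightarrow> 'v) \<Rightarrow> 'v set \<Rightarrow> bool" where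
  "csubspace J S \<longleftrightarrow> subspace S \<and> (\<forall>x\<in>S. J x \<in> S)"

definition clinear_map :: "('v::real_vector \<Rightarrow> 'v) \<Rightarrow> ('w::real_vector \<Rightarrow> 'w) \<Rightarrow> ('v \<Rightarrow> 'w) \<Rightarrow> bool" where
  "clinear_map J1 J2 f \<longleftrightarrow> (\<forall>x y. f (x + y) = f x + f y) \<and> (\<forall>c x. f (cscale J1 c x) = cscale J2 c (f x))"

definition clinear_functional :: "('v::real_vector \<Rightarrow> 'v) \<Rightarrow> ('v \<Rightarrow> complex) \<Rightarrow> bool" where
  "clinear_functional J f \<longleftrightarrow> (\<forall>x y. f (x + y) = f x + f y) \<and> (\<forall>c x. f (cscale J c x) = c * f x)"

definition clinear_functional_on :: "('v::real_vector \<Rightarrow> 'v) \<Rightarrow> 'v set \<Rightarrow> ('v \<Rightarrow> complex) \<Rightarrow> bool" where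
  "clinear_functional_on J S f \<longleftrightarrow> (\<forall>x\<in>S. \<forall>y\<in>S. f (x + y) = f x + f y) \<and> (\<forall>c. \<forall>x\<in>S. f (cscale J c x) = c * f x)"

definition seminorm_on :: "('v::real_vector \<Rightarrow> 'v) \<Rightarrow> 'v set \<Rightarrow> ('v \<Rightarrow> real) \<Rightarrow> bool" where
  "seminorm_on J S p \<longleftrightarrow> (\<forall>x\<in>S. \<forall>y\<in>S. p (x + y) \<le> p x + p y) \<and> (\<forall>c. \<forall>x\<in>S. p (cscale J c x) = cmod c * p x)"

text \<open>ip is a complex inner product (linear in the first argument) inducing the norm.
  Together with completeness of the normed type this makes the type a complex Hilbert space.\<close>
definition complex_inner_product :: "('h::real_normed_vector \<Rightarrow> 'h) \<Rightarrow> ('h \<Rightarrow> 'h \<Rightarrow> complex) \<Rightarrow> bool" where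
  "complex_inner_product J ip \<longleftrightarrow>
     complex_structure J \<and>
     (\<forall>x y z. ip (x + y) z = ip x z + ip y z) \<and>
     (\<forall>c x y. ip (cscale J c x) y = c * ip x y) \<and>
     (\<forall>x y. ip y x = cnj (ip x y)) \<and>
     (\<forall>x. ip x x = complex_of_real ((norm x)\<^sup>2))"

text \<open>A family P of seminorms defining the topology; w.l.o.g. P is directed (closed
  under finite maxima up to domination), so continuity can be stated with one seminorm.\<close>

definition directed_seminorms :: "('v \<Rightarrow> real) set \<Rightarrow> bool" where
  "directed_seminorms P \<longleftrightarrow> P \<noteq> {} \<and> (\<forall>p\<in>P. \<forall>q\<in>P. \<exists>r\<in>P. \<forall>x. max (p x) (q x) \<le> r x)"

definition sn_continuous_on :: "('v \<Rightarrow> real) set \<Rightarrow> ('w \<Rightarrow> real) set \<Rightarrow> 'v set \<Rightarrow> ('v \<Rightarrow> 'w) \<Rightarrow> bool" where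
  "sn_continuous_on P Q S f \<longleftrightarrow> (\<forall>q\<in>Q. \<exists>p\<in>P. \<exists>C. \<forall>x\<in>S. q (f x) \<le> C * p x)"

definition sn_continuous_seminorm_on :: "('v \<Rightarrow> real) set \<Rightarrow> 'v set \<Rightarrow> ('v \<Rightarrow> real) \<Rightarrow> bool" where
  "sn_continuous_seminorm_on P S q \<longleftrightarrow> (\<exists>p\<in>P. \<exists>C. \<forall>x\<in>S. q x \<le> C * p x)"

definition sn_continuous_functional :: "('v \<Rightarrow> real) set \<Rightarrow> ('v \<Rightarrow> complex) \<Rightarrow> bool" where
  "sn_continuous_functional P f \<longleftrightarrow> (\<exists>p\<in>P. \<exists>C. \<forall>x. cmod (f x) \<le> C * p x)"

text \<open>convergence of a net (given as a function on an index set with a filter F, e.g. the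
  section filter of a directed set) in the topology of the seminorms P\<close>
definition sn_tendsto :: "('v::real_vector \<Rightarrow> real) set \<Rightarrow> ('i \<Rightarrow> 'v) \<Rightarrow> 'v \<Rightarrow> 'i filter \<Rightarrow> bool" where
  "sn_tendsto P f x F \<longleftrightarrow> (\<forall>p\<in>P. ((\<lambda>i. p (f i - x)) \<longlongrightarrow> 0) F)"

definition sn_cauchy_filter :: "('v::real_vector \<Rightarrow> real) set \<Rightarrow> 'v filter \<Rightarrow> bool" where
  "sn_cauchy_filter P F \<longleftrightarrow> (\<forall>p\<in>P. \<forall>e>0. eventually (\<lambda>(x, y). p (x - y) < e) (F \<times>\<^sub>F F))"

text \<open>The type 'a is the completion A; A0 is a subset of it.  mul x y is the product,
  meaningful when one factor is in A0; star is the involution; e is the identity.\<close>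

definition lc_quasi_star_algebra ::
  "('a::real_vector \<Rightarrow> 'a) \<Rightarrow> 'a set \<Rightarrow> ('a \<Rightarrow> real) set \<Rightarrow> ('a \<Rightarrow> 'a) \<Rightarrow> ('a \<Rightarrow> 'a \<Rightarrow> 'a) \<Rightarrow> 'a \<Rightarrow> bool" where
  "lc_quasi_star_algebra J A0 P star mul e \<longleftrightarrow>
     complex_structure J \<and> csubspace J A0 \<and>
     \<comment> \<open>topology tau: a directed family of seminorms, Hausdorff\<close>
     (\<forall>p\<in>P. seminorm_on J UNIV p) \<and> directed_seminorms P \<and>
     (\<forall>x. (\<forall>p\<in>P. p x = 0) \<longrightarrow> x = 0) \<and>
     \<comment> \<open>A is the tau-completion of A0: complete, with A0 dense\<close>
     (\<forall>F. F \<noteq> bot \<and> sn_cauchy_filter P F \<longrightarrow>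
          (\<exists>x. \<forall>p\<in>P. \<forall>r>0. eventually (\<lambda>y. p (y - x) < r) F)) \<and>
     (\<forall>x. \<forall>p\<in>P. \<forall>r>0. \<exists>a\<in>A0. p (x - a) < r) \<and>
     \<comment> \<open>A0 is a *-algebra with identity e\<close>
     e \<in> A0 \<and>
     (\<forall>a\<in>A0. \<forall>b\<in>A0. mul a b \<in> A0) \<and> (\<forall>a\<in>A0. star a \<in> A0) \<and>
     (\<forall>a\<in>A0. \<forall>b\<in>A0. \<forall>c\<in>A0. mul (mul a b) c = mul a (mul b c)) \<and>
     \<comment> \<open>bilinearity of the products with one factor in A0\<close>
     (\<forall>a\<in>A0. \<forall>x y. mul (x + y) a = mul x a + mul y a \<and> mul a (x + y) = mul a x + mul a y) \<and>
     (\<forall>a\<in>A0. \<forall>c x. mul (cscale J c x) a = cscale J c (mul x a) \<and> mul a (cscale J c x) = cscale J c (mul a x)) \<and>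
     (\<forall>a\<in>A0. \<forall>b\<in>A0. \<forall>x. mul x (a + b) = mul x a + mul x b \<and> mul (a + b) x = mul a x + mul b x) \<and>
     (\<forall>a\<in>A0. \<forall>c x. mul x (cscale J c a) = cscale J c (mul x a) \<and> mul (cscale J c a) x = cscale J c (mul a x)) \<and>
     \<comment> \<open>associativity with one factor in A\<close>
     (\<forall>a\<in>A0. \<forall>b\<in>A0. \<forall>x. mul x (mul a b) = mul (mul x a) b \<and>
                          mul (mul a b) x = mul a (mul b x) \<and>
                          mul (mul a x) b = mul a (mul x b)) \<and>
     \<comment> \<open>identity\<close>
     (\<forall>x. mul e x = x \<and> mul x e = x) \<and>
     \<comment> \<open>involution on A: conjugate linear, involutive, anti-multiplicative\<close>
     (\<forall>x. star (star x) = x) \<and> (\<forall>x y. star (x + y) = star x + star y) \<and>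
     (\<forall>c x. star (cscale J c x) = cscale J (cnj c) (star x)) \<and>
     (\<forall>a\<in>A0. \<forall>x. star (mul a x) = mul (star x) (star a) \<and> star (mul x a) = mul (star a) (star x)) \<and>
     \<comment> \<open>tau-continuity of the involution and of the multiplications by elements of A0
        (on A, i.e. the operations on A are the continuous extensions)\<close>
     sn_continuous_on P P UNIV star \<and>
     (\<forall>b\<in>A0. sn_continuous_on P P UNIV (\<lambda>x. mul x b) \<and> sn_continuous_on P P UNIV (\<lambda>x. mul b x))"

definition cpos :: "complex \<Rightarrow> bool" where
  "cpos z \<longleftrightarrow> Im z = 0 \<and> 0 \<le> Re z"

definition representable ::
  "'a set \<Rightarrow> ('a \<Rightarrow> 'a) \<Rightarrow> ('a \<Rightarrow> 'a \<Rightarrow> 'a) \<Rightarrow> ('a \<Rightarrow> complex) \<Rightarrow> bool" where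
  "representable A0 star mul \<omega> \<longleftrightarrow>
     (\<forall>a\<in>A0. cpos (\<omega> (mul (star a) a))) \<and>
     (\<forall>a\<in>A0. \<forall>b\<in>A0. \<forall>x. \<omega> (mul (mul (star b) x) a) = cnj (\<omega> (mul (mul (star a) (star x)) b))) \<and>
     (\<forall>x. \<exists>\<gamma>>0. \<forall>a\<in>A0. cmod (\<omega> (mul (star x) a)) \<le> \<gamma> * sqrt (Re (\<omega> (mul (star a) a))))"

definition GNS_construction ::
  "('a::real_vector \<Rightarrow> 'a) \<Rightarrow> 'a set \<Rightarrow> ('a \<Rightarrow> 'a) \<Rightarrow> ('a \<Rightarrow> 'a \<Rightarrow> 'a) \<Rightarrow> ('a \<Rightarrow> complex)
   \<Rightarrow> ('h::{real_normed_vector, complete_space} \<Rightarrow> 'h) \<Rightarrow> ('h \<Rightarrow> 'h \<Rightarrow> complex) \<Rightarrow> ('a \<Rightarrow> 'h) \<Rightarrow> ('a \<Rightarrow> 'h \<Rightarrow> 'h) \<Rightarrow> bool" where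
  "GNS_construction J A0 star mul \<omega> JH ip lam repr \<longleftrightarrow>
     complex_inner_product JH ip \<and>
     clinear_map J JH lam \<and>
     closure (lam ` A0) = UNIV \<and>
     (\<forall>x. \<forall>a\<in>A0. ip (lam x) (lam a) = \<omega> (mul (star a) x)) \<and>
     (\<forall>x. \<forall>a\<in>A0. repr x (lam a) = lam (mul x a))"

end

theory Submission imports Defs begin

lemma sn_nonneg:
  assumes "seminorm_on J S p" "subspace S" "y \<in> S"
  shows "0 \<le> p y"
proof -
  have m: "cscale J (-1) y = - y" by (simp add: cscale_def)
  have z: "cscale J 0 0 = (0::'a)" by (simp add: cscale_def)
  have "0 \<in> S" "- y \<in> S" using assms(2,3) by (auto simp: subspace_neg subspace_0)
  have "p 0 = 0" using assms(1) \<open>0 \<in> S\<close> unfolding seminorm_on_def by (metis z norm_zero mult_zero_left)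
  moreover have "p (y + - y) \<le> p y + p (- y)" using assms(1) \<open>- y \<in> S\<close> assms(3) unfolding seminorm_on_def by blast
  moreover have "p (- y) = p y" using assms(1) assms(3) unfolding seminorm_on_def by (metis m norm_minus_cancel norm_one mult_1)
  ultimately show ?thesis by simp
qed

lemma sn_minus:
  assumes "seminorm_on J S p" "y \<in> S"
  shows "p (- y) = p y"
proof -
  have m: "cscale J (-1) y = - y" by (simp add: cscale_def)
  show ?thesis using assms unfolding seminorm_on_def by (metis m norm_minus_cancel norm_one mult_1)
qed

lemma add_diff_hom:
  assumes "\<forall>u v. f (u + v) = f u + f v"
  shows "f ((u::'a::ab_group_add) - v) = f u - (f v :: 'b::ab_group_add)"
proof -
  have "f u = f (v + (u - v))" by simp
  also have "\<dots> = f v + f (u - v)" using assms by blast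
  finally show ?thesis by (simp add: algebra_simps)
qed

lemma polar:
  assumes "complex_inner_product JH ip"
  shows "Re (ip u v) = ((norm (u + v))\<^sup>2 - (norm u)\<^sup>2 - (norm v)\<^sup>2) / 2"
proof -
  have a: "\<And>x y z. ip (x + y) z = ip x z + ip y z" and c: "\<And>x y. ip y x = cnj (ip x y)"
    and n: "\<And>x. ip x x = complex_of_real ((norm x)\<^sup>2)"
    using assms unfolding complex_inner_product_def by blast+
  have "ip (u+v) (u+v) = ip u (u+v) + ip v (u+v)" by (rule a)
  also have "ip u (u+v) = ip u u + ip u v" by (metis a c complex_cnj_add complex_cnj_cnj)
  also have "ip v (u+v) = ip v u + ip v v" by (metis a c complex_cnj_add complex_cnj_cnj)
  finally have "Re (ip (u+v) (u+v)) = Re (ip u u) + Re (ip u v) + Re (ip v u) + Re (ip v v)" by simp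
  moreover have "Re (ip v u) = Re (ip u v)" using c[of u v] by simp
  ultimately show ?thesis by (simp add: n)
qed

theorem lemma9:
  fixes J :: "'a::real_vector \<Rightarrow> 'a" and A0 :: "'a set" and P :: "('a \<Rightarrow> real) set"
    and star :: "'a \<Rightarrow> 'a" and mul :: "'a \<Rightarrow> 'a \<Rightarrow> 'a" and e :: 'a
    and \<omega>0 \<omega> :: "'a \<Rightarrow> complex" and p :: "'a \<Rightarrow> real"
    and JH :: "'h::{real_normed_vector, complete_space} \<Rightarrow> 'h"
    and ip :: "'h \<Rightarrow> 'h \<Rightarrow> complex" and lam :: "'a \<Rightarrow> 'h" and repr :: "'a \<Rightarrow> 'h \<Rightarrow> 'h"
    and x :: 'a and xa :: "'i \<Rightarrow> 'a" and F :: "'i filter"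
  assumes alg: "lc_quasi_star_algebra J A0 P star mul e"
    and \<omega>0_lin: "clinear_functional_on J A0 \<omega>0"
    and \<omega>0_pos: "\<forall>a\<in>A0. cpos (\<omega>0 (mul (star a) a))"
    and p_sn: "seminorm_on J A0 p"
    and p_cont: "sn_continuous_seminorm_on P A0 p"
    and \<omega>0_bound: "\<forall>a\<in>A0. Re (\<omega>0 (mul (star a) a)) \<le> (p a)\<^sup>2"
    and \<omega>_lin: "clinear_functional J \<omega>"
    and \<omega>_cont: "sn_continuous_functional P \<omega>"
    and \<omega>_ext: "\<forall>a\<in>A0. \<omega> a = \<omega>0 a"
    and \<omega>_repr: "representable A0 star mul \<omega>"
    and GNS: "GNS_construction J A0 star mul \<omega> JH ip lam repr"
    and xa_A0: "\<forall>i. xa i \<in> A0"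
    and lim: "sn_tendsto P xa x F"
  shows "((\<lambda>i. lam (xa i)) \<longlongrightarrow> lam x) F"
proof (cases "F = bot")
  case True then show ?thesis by simp
next
  case Fnb: False
  note algd = alg[unfolded lc_quasi_star_algebra_def]
  have cs: "csubspace J A0" using algd by (elim conjE) assumption
  then have sub: "subspace A0" unfolding csubspace_def by blast
  have snU: "\<forall>q\<in>P. seminorm_on J UNIV q" using algd by (elim conjE) assumption
  have mulAA: "\<forall>a\<in>A0. \<forall>x y. mul (x + y) a = mul x a + mul y a \<and> mul a (x + y) = mul a x + mul a y" using algd by (elim conjE) assumption
  have mulcl: "\<forall>a\<in>A0. \<forall>b\<in>A0. mul a b \<in> A0" using algd by (elim conjE) assumption
  have starA: "\<forall>a\<in>A0. star a \<in> A0" using algd by (elim conjE) assumption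
  have mulcc: "\<forall>b\<in>A0. sn_continuous_on P P UNIV (\<lambda>x. mul x b) \<and> sn_continuous_on P P UNIV (\<lambda>x. mul b x)" using algd by (elim conjE) assumption
  have mulc: "\<forall>b\<in>A0. sn_continuous_on P P UNIV (\<lambda>y. mul b y)" using mulcc by blast
  note gd = GNS[unfolded GNS_construction_def]
  have cip: "complex_inner_product JH ip" using gd by blast
  have ipa: "\<forall>u v z. ip (u + v) z = ip u z + ip v z" and ipn: "\<And>u. ip u u = complex_of_real ((norm u)\<^sup>2)"
    using cip unfolding complex_inner_product_def by blast+
  have lama: "\<forall>u v. lam (u + v) = lam u + lam v" using gd unfolding clinear_map_def by blast
  have dens: "closure (lam ` A0) = UNIV" using gd by blast
  have ipl: "\<forall>y. \<forall>a\<in>A0. ip (lam y) (lam a) = \<omega> (mul (star a) y)" using gd by blast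
  have \<omega>a: "\<forall>u v. \<omega> (u + v) = \<omega> u + \<omega> v" using \<omega>_lin unfolding clinear_functional_def by blast
  have qnn: "\<And>q y. q \<in> P \<Longrightarrow> 0 \<le> q y"
    using snU sn_nonneg[of J UNIV] subspace_UNIV by blast
  have qminus: "\<And>q y. q \<in> P \<Longrightarrow> q (- y) = q y"
    using snU sn_minus[of J UNIV] by blast
  have qtri: "\<And>q y z. q \<in> P \<Longrightarrow> q (y + z) \<le> q y + q z"
    using snU unfolding seminorm_on_def by blast
  obtain q C where qP: "q \<in> P" and pq: "\<forall>y\<in>A0. p y \<le> C * q y"
    using p_cont unfolding sn_continuous_seminorm_on_def by blast
  have lam_bound: "norm (lam b) \<le> \<bar>C\<bar> * q b" if b: "b \<in> A0" for b
  proof -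
    have sb: "mul (star b) b \<in> A0" using mulcl starA b by blast
    have "(norm (lam b))\<^sup>2 = Re (ip (lam b) (lam b))" by (simp add: ipn)
    also have "\<dots> = Re (\<omega>0 (mul (star b) b))" using ipl b \<omega>_ext sb by simp
    also have "\<dots> \<le> (p b)\<^sup>2" using \<omega>0_bound b by blast
    finally have 1: "(norm (lam b))\<^sup>2 \<le> (p b)\<^sup>2" .
    have "0 \<le> p b" using sn_nonneg[OF p_sn sub b] .
    then have "norm (lam b) \<le> p b" using 1 using power2_le_imp_le by blast
    also have "p b \<le> C * q b" using pq b by blast
    also have "\<dots> \<le> \<bar>C\<bar> * q b" using qnn[OF qP] by (simp add: mult_right_mono)
    finally show ?thesis .
  qed
  have cauchy: "cauchy_filter (filtermap (\<lambda>i. lam (xa i)) F)"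
    unfolding cauchy_filter_metric_filtermap
  proof (intro allI impI)
    fix e :: real assume e: "e > 0"
    define d where "d = e / (2 * (\<bar>C\<bar> + 1))"
    have d: "d > 0" using e by (simp add: d_def add_pos_nonneg)
    have ev: "eventually (\<lambda>i. q (xa i - x) < d) F"
      using lim qP d unfolding sn_tendsto_def by (metis (mono_tags, lifting) eventually_mono order_tendstoD(2))
    show "\<exists>Q. eventually Q F \<and> (\<forall>i j. Q i \<and> Q j \<longrightarrow> dist (lam (xa i)) (lam (xa j)) < e)"
    proof (intro exI conjI allI impI)
      show "eventually (\<lambda>i. q (xa i - x) < d) F" by (rule ev)
      fix i j assume ij: "q (xa i - x) < d \<and> q (xa j - x) < d"
      have bA: "xa i - xa j \<in> A0" using xa_A0 sub by (simp add: subspace_diff)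
      have h1: "dist (lam (xa i)) (lam (xa j)) \<le> \<bar>C\<bar> * q (xa i - xa j)"
        using lam_bound[OF bA] by (simp add: dist_norm add_diff_hom[OF lama])
      have "q (xa i - xa j) \<le> q (xa i - x) + q (- (xa j - x))"
        using qtri[OF qP, of "xa i - x" "- (xa j - x)"] by simp
      also have "\<dots> < 2 * d" using ij qminus[OF qP, of "xa j - x"] by linarith
      finally have h2: "q (xa i - xa j) \<le> 2 * d" by simp
      have "dist (lam (xa i)) (lam (xa j)) \<le> \<bar>C\<bar> * (2 * d)"
        using h1 mult_left_mono[OF h2, of "\<bar>C\<bar>"] by simp
      also have "\<bar>C\<bar> * (2 * d) < e" using e unfolding d_def by (simp add: field_simps)
      finally show "dist (lam (xa i)) (lam (xa j)) < e" .
    qed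
  qed
  obtain h where "filtermap (\<lambda>i. lam (xa i)) F \<le> nhds h"
    using cauchy_filter_complete_converges[OF cauchy complete_UNIV] Fnb
    by (auto simp: filtermap_bot_iff)
  then have hl: "((\<lambda>i. lam (xa i)) \<longlongrightarrow> h) F" by (simp add: filterlim_def)
  define dd where "dd = h - lam x"
  have orth: "Re (ip dd (lam a)) = 0" if a: "a \<in> A0" for a
  proof -
    have t1: "((\<lambda>i. Re (ip (lam (xa i) - lam x) (lam a))) \<longlongrightarrow> Re (ip dd (lam a))) F"
      unfolding polar[OF cip] dd_def by (intro tendsto_intros hl) auto
    have sa: "star a \<in> A0" using starA a by blast
    obtain p0 C0 where p0: "p0 \<in> P" and b0: "\<forall>y. cmod (\<omega> y) \<le> C0 * p0 y"
      using \<omega>_cont unfolding sn_continuous_functional_def by blast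
    obtain p1 C1 where p1: "p1 \<in> P" and b1: "\<forall>y. p0 (mul (star a) y) \<le> C1 * p1 y"
      using mulc sa p0 unfolding sn_continuous_on_def by blast
    have eq: "Re (ip (lam (xa i) - lam x) (lam a)) = Re (\<omega> (mul (star a) (xa i - x)))" for i
    proof -
      have "ip (lam (xa i) - lam x) (lam a) = ip (lam (xa i - x)) (lam a)"
        by (simp add: add_diff_hom[OF lama])
      also have "\<dots> = \<omega> (mul (star a) (xa i - x))" using ipl a by blast
      finally show ?thesis by simp
    qed
    have bnd: "norm (Re (\<omega> (mul (star a) (xa i - x)))) \<le> \<bar>C0\<bar> * (\<bar>C1\<bar> * p1 (xa i - x))" for i
    proof -
      let ?y = "mul (star a) (xa i - x)"
      have "norm (Re (\<omega> ?y)) \<le> cmod (\<omega> ?y)" by (simp add: abs_Re_le_cmod)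
      also have "\<dots> \<le> C0 * p0 ?y" using b0 by blast
      also have "\<dots> \<le> \<bar>C0\<bar> * p0 ?y" using qnn[OF p0] by (simp add: mult_right_mono)
      also have "p0 ?y \<le> \<bar>C1\<bar> * p1 (xa i - x)"
        using b1 qnn[OF p1, of "xa i - x"] by (meson abs_ge_self mult_right_mono order.trans)
      finally show ?thesis by (simp add: mult_left_mono)
    qed
    have p1l: "((\<lambda>i. p1 (xa i - x)) \<longlongrightarrow> 0) F" using lim p1 unfolding sn_tendsto_def by blast
    have "((\<lambda>i. Re (\<omega> (mul (star a) (xa i - x)))) \<longlongrightarrow> 0) F"
      apply (rule Lim_null_comparison[where g="\<lambda>i. \<bar>C0\<bar> * (\<bar>C1\<bar> * p1 (xa i - x))"])
       apply (rule always_eventually) using bnd apply blast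
      using tendsto_mult_right_zero[OF tendsto_mult_right_zero[OF p1l]] by simp
    then have t2: "((\<lambda>i. Re (ip (lam (xa i) - lam x) (lam a))) \<longlongrightarrow> 0) F" by (simp add: eq)
    show ?thesis using tendsto_unique[OF Fnb t1 t2] .
  qed
  have "closure (lam ` A0) \<subseteq> {v. Re (ip dd v) = 0}"
  proof (rule closure_minimal)
    show "lam ` A0 \<subseteq> {v. Re (ip dd v) = 0}" using orth by blast
    show "closed {v. Re (ip dd v) = 0}" unfolding polar[OF cip]
      by (intro closed_Collect_eq continuous_intros) auto
  qed
  then have "Re (ip dd dd) = 0" using dens by blast
  then have "dd = 0" by (simp add: ipn)
  then show ?thesis using hl unfolding dd_def by simp
qed

end
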